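(* If $\mathcal{F}$ is a strong regular facets-pairing structure on $\mathcal{C}^n$, then for every proper face $f$ of $\mathcal{C}^n$ the number of faces in the face family $\widehat f$ is a power of $2$.
   Context: Let $[\pm n]=\{\pm1,\dots,\pm n\}$ and $\mathcal{C}^n=\{x\in\mathbb{R}^n: -\tfrac14\le x_i\le\tfrac14\}$. For $1\le i\le n$, $\mathbf{F}(i)$ and $\mathbf{F}(-i)$ denote the facets of $\mathcal{C}^n$ in $\{x_i=\tfrac14\}$ and $\{x_i=-\tfrac14\}$; for $j_1,\dots,j_s\in[\pm n]$ with distinct absolute values, $\mathbf{F}(j_1,\dots,j_s)=\bigcap_i\mathbf{F}(j_i)$ (every proper face has this form). A signed permutation is a bijection $\sigma$ of $[\pm n]$ with $\sigma(-k)=-\sigma(k)$. A facets-pairing structure on $\mathcal{C}^n$ is a pair $(\omega,\{\tau_j\})$ where $\omega$ is a bijection of $[\pm n]$ with $\omega\circ\omega=\mathrm{id}$ and $\tau_j:\mathbf{F}(j)\to\mathbf{F}(\omega(j))$ are face-preserving homeomorphisms with $\tau_{\omega(j)}=\tau_j^{-1}$, such that for all $|j|\ne|k|$, writing $\tau_j(\mathbf{F}(j,k))=\mathbf{F}(\omega(j),k')$ and $\tau_k(\mathbf{F}(j,k))=\mathbf{F}(j',\omega(k))$, one has $\tau_{k'}\tau_j(p)=\tau_{j'}\tau_k(p)$ for all $p\in\mathbf{F}(j,k)$. It is regular if each $\tau_j$ is a Euclidean isometry and $\omega$ is a signed permutation. A composition $\tau_{k_m}\circ\dots\circ\tau_{k_1}$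 applied to a proper face $f$ is valid if $f\subset\mathbf{F}(k_1)$ and $\tau_{k_i}\circ\dots\circ\tau_{k_1}(f)\subset\mathbf{F}(k_{i+1})$ for $1\le i<m$ ($m=0$ allowed). The face family $\widehat f$ is the set of faces $\tau_{k_m}\circ\dots\circ\tau_{k_1}(f)$ over all valid compositions. For a proper face $f$ let $\Xi(f)$ be the set of facets containing $f$. If $f\subset\mathbf{F}(k)$ and $f'=\tau_k(f)$, define $\Psi^f_k:\Xi(f)\to\Xi(f')$ by $\Psi^f_k(\mathbf{F}(k))=\mathbf{F}(\omega(k))$ and, for $F'\in\Xi(f)\setminus\{\mathbf{F}(k)\}$, $\Psi^f_k(F')$ is the facet $G$ with $G\cap\mathbf{F}(\omega(k))=\tau_k(F'\cap\mathbf{F}(k))$. $\mathcal{F}$ is strong if for every proper face $f$ and any two valid compositions mapping $f$ onto the same face $\widetilde f$: (a) they agree at every point of $f$; and (b) the corresponding composites of the maps $\Psi$ along the two compositions coincide as maps $\Xi(f)\to\Xi(\widetilde f)$. *)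

theory Defs
  imports "HOL-Analysis.Analysis"
begin

text \<open>Points of R^n are represented as functions nat => real whose coordinates
  1..n are the Euclidean coordinates and all other coordinates are 0.
  Signed indices [+-n] are the integers j with j \<noteq> 0 and |j| \<le> n.\<close>

definition pm :: "nat \<Rightarrow> int set" where
  "pm n = {j. j \<noteq> 0 \<and> \<bar>j\<bar> \<le> int n}"

definition cube :: "nat \<Rightarrow> (nat \<Rightarrow> real) set" where
  "cube n = {x. (\<forall>i\<in>{1..n}. -1/4 \<le> x i \<and> x i \<le> 1/4) \<and> (\<forall>i. i \<notin> {1..n} \<longrightarrow> x i = 0)}"

definition facet :: "nat \<Rightarrow> int \<Rightarrow> (nat \<Rightarrow> real) set" where
  "facet n j = (if j \<in> pm n then {x \<in> cube n. x (nat \<bar>j\<bar>) = of_int (sgn j) / 4} else {})"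

definition face :: "nat \<Rightarrow> int set \<Rightarrow> (nat \<Rightarrow> real) set" where
  "face n S = (\<Inter>j\<in>S. facet n j)"

definition admissible :: "nat \<Rightarrow> int set \<Rightarrow> bool" where
  "admissible n S \<longleftrightarrow> S \<subseteq> pm n \<and> S \<noteq> {} \<and> (\<forall>j\<in>S. - j \<notin> S)"

definition proper_faces :: "nat \<Rightarrow> (nat \<Rightarrow> real) set set" where
  "proper_faces n = {face n S | S. admissible n S}"

definition edist :: "nat \<Rightarrow> (nat \<Rightarrow> real) \<Rightarrow> (nat \<Rightarrow> real) \<Rightarrow> real" where
  "edist n x y = sqrt (\<Sum>i\<in>{1..n}. (x i - y i)\<^sup>2)"

definition facets_pairing :: "nat \<Rightarrow> (int \<Rightarrow> int) \<Rightarrow> (int \<Rightarrow> (nat \<Rightarrow> real) \<Rightarrow> (nat \<Rightarrow> real)) \<Rightarrow> bool" where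
  "facets_pairing n \<omega> \<tau> \<longleftrightarrow>
     bij_betw \<omega> (pm n) (pm n) \<and> (\<forall>j\<in>pm n. \<omega> (\<omega> j) = j) \<and>
     (\<forall>j\<in>pm n. homeomorphism (facet n j) (facet n (\<omega> j)) (\<tau> j) (\<tau> (\<omega> j))) \<and>
     (\<forall>j\<in>pm n. \<forall>f\<in>proper_faces n. f \<subseteq> facet n j \<longrightarrow>
         \<tau> j ` f \<in> proper_faces n \<and> \<tau> j ` f \<subseteq> facet n (\<omega> j)) \<and>
     (\<forall>j\<in>pm n. \<forall>k\<in>pm n. \<forall>k'\<in>pm n. \<forall>j'\<in>pm n.
         \<bar>j\<bar> \<noteq> \<bar>k\<bar> \<and> \<bar>k'\<bar> \<noteq> \<bar>\<omega> j\<bar> \<and> \<bar>j'\<bar> \<noteq> \<bar>\<omega> k\<bar> \<and>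
         \<tau> j ` face n {j, k} = face n {\<omega> j, k'} \<and>
         \<tau> k ` face n {j, k} = face n {j', \<omega> k} \<longrightarrow>
         (\<forall>p\<in>face n {j, k}. \<tau> k' (\<tau> j p) = \<tau> j' (\<tau> k p)))"

definition regular :: "nat \<Rightarrow> (int \<Rightarrow> int) \<Rightarrow> (int \<Rightarrow> (nat \<Rightarrow> real) \<Rightarrow> (nat \<Rightarrow> real)) \<Rightarrow> bool" where
  "regular n \<omega> \<tau> \<longleftrightarrow>
     (\<forall>j\<in>pm n. \<forall>x\<in>facet n j. \<forall>y\<in>facet n j. edist n (\<tau> j x) (\<tau> j y) = edist n x y) \<and>
     (\<forall>k\<in>pm n. \<omega> (- k) = - \<omega> k)"

fun comp_tau :: "(int \<Rightarrow> (nat \<Rightarrow> real) \<Rightarrow> (nat \<Rightarrow> real)) \<Rightarrow> int list \<Rightarrow> (nat \<Rightarrow> real) \<Rightarrow> (nat \<Rightarrow> real)" where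
  "comp_tau \<tau> [] p = p"
| "comp_tau \<tau> (k # ks) p = comp_tau \<tau> ks (\<tau> k p)"

fun valid :: "nat \<Rightarrow> (int \<Rightarrow> (nat \<Rightarrow> real) \<Rightarrow> (nat \<Rightarrow> real)) \<Rightarrow> (nat \<Rightarrow> real) set \<Rightarrow> int list \<Rightarrow> bool" where
  "valid n \<tau> f [] = True"
| "valid n \<tau> f (k # ks) = (k \<in> pm n \<and> f \<subseteq> facet n k \<and> valid n \<tau> (\<tau> k ` f) ks)"

definition face_family :: "nat \<Rightarrow> (int \<Rightarrow> (nat \<Rightarrow> real) \<Rightarrow> (nat \<Rightarrow> real)) \<Rightarrow> (nat \<Rightarrow> real) set \<Rightarrow> (nat \<Rightarrow> real) set set" where
  "face_family n \<tau> f = {comp_tau \<tau> ks ` f | ks. valid n \<tau> f ks}"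

text \<open>Facets are identified with their signed indices; Xi(f) = {j. f \<subseteq> F(j)}.\<close>
definition Xi :: "nat \<Rightarrow> (nat \<Rightarrow> real) set \<Rightarrow> int set" where
  "Xi n f = {j \<in> pm n. f \<subseteq> facet n j}"

definition Psi :: "nat \<Rightarrow> (int \<Rightarrow> int) \<Rightarrow> (int \<Rightarrow> (nat \<Rightarrow> real) \<Rightarrow> (nat \<Rightarrow> real)) \<Rightarrow> int \<Rightarrow> int \<Rightarrow> int" where
  "Psi n \<omega> \<tau> k j = (if j = k then \<omega> k
      else (THE g. g \<in> pm n \<and> facet n g \<inter> facet n (\<omega> k) = \<tau> k ` (facet n j \<inter> facet n k)))"

fun comp_Psi :: "nat \<Rightarrow> (int \<Rightarrow> int) \<Rightarrow> (int \<Rightarrow> (nat \<Rightarrow> real) \<Rightarrow> (nat \<Rightarrow> real)) \<Rightarrow> int list \<Rightarrow> int \<Rightarrow> int" where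
  "comp_Psi n \<omega> \<tau> [] j = j"
| "comp_Psi n \<omega> \<tau> (k # ks) j = comp_Psi n \<omega> \<tau> ks (Psi n \<omega> \<tau> k j)"

definition strong :: "nat \<Rightarrow> (int \<Rightarrow> int) \<Rightarrow> (int \<Rightarrow> (nat \<Rightarrow> real) \<Rightarrow> (nat \<Rightarrow> real)) \<Rightarrow> bool" where
  "strong n \<omega> \<tau> \<longleftrightarrow>
     (\<forall>f\<in>proper_faces n. \<forall>ks ls. valid n \<tau> f ks \<and> valid n \<tau> f ls \<and>
        comp_tau \<tau> ks ` f = comp_tau \<tau> ls ` f \<longrightarrow>
        (\<forall>p\<in>f. comp_tau \<tau> ks p = comp_tau \<tau> ls p) \<and>
        (\<forall>j\<in>Xi n f. comp_Psi n \<omega> \<tau> ks j = comp_Psi n \<omega> \<tau> ls j))"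

end

theory Submission imports Defs begin

definition wit :: "nat \<Rightarrow> int set \<Rightarrow> nat \<Rightarrow> real" where
  "wit n A = (\<lambda>x. if x \<in> {1..n} then (if int x \<in> A then 1/4 else if - int x \<in> A then -1/4 else 0) else 0)"

lemma pm_iff: "j \<in> pm n \<longleftrightarrow> j \<noteq> 0 \<and> \<bar>j\<bar> \<le> int n" by (simp add: pm_def)

lemma wit_cube: "wit n A \<in> cube n"
  by (auto simp: wit_def cube_def)

lemma wit_coord:
  assumes "admissible n A" "a \<in> pm n"
  shows "wit n A (nat \<bar>a\<bar>) = of_int (sgn a) / 4 \<longleftrightarrow> a \<in> A"
proof -
  have r: "nat \<bar>a\<bar> \<in> {1..n}" using assms(2) by (auto simp: pm_iff)
  show ?thesis
  proof (cases "a > 0")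
    case True
    then have "int (nat \<bar>a\<bar>) = a" by simp
    then show ?thesis using r True assms(1) unfolding admissible_def by (auto simp: wit_def)
  next
    case False
    then have a0: "a < 0" using assms(2) by (auto simp: pm_iff)
    then have "int (nat \<bar>a\<bar>) = -a" by simp
    then show ?thesis using r a0 assms(1) unfolding admissible_def by (auto simp: wit_def)
  qed
qed

lemma wit_face: "admissible n A \<Longrightarrow> wit n A \<in> face n A"
proof -
  assume a: "admissible n A"
  have "wit n A \<in> facet n j" if j: "j \<in> A" for j
  proof -
    have jp: "j \<in> pm n" using a j by (auto simp: admissible_def)
    have "wit n A (nat \<bar>j\<bar>) = of_int (sgn j) / 4" using wit_coord[OF a jp] j by simp
    then show ?thesis using jp wit_cube unfolding facet_def by simp
  qed
  then show ?thesis unfolding face_def by blast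
qed

lemma face_sub_iff:
  assumes "admissible n A" "admissible n B"
  shows "face n A \<subseteq> face n B \<longleftrightarrow> B \<subseteq> A"
proof
  assume h: "face n A \<subseteq> face n B"
  show "B \<subseteq> A"
  proof
    fix b assume b: "b \<in> B"
    then have bp: "b \<in> pm n" using assms(2) by (auto simp: admissible_def)
    have "wit n A \<in> facet n b" using h wit_face[OF assms(1)] b unfolding face_def by auto
    then have "wit n A (nat \<bar>b\<bar>) = of_int (sgn b) / 4" using bp by (simp add: facet_def)
    then show "b \<in> A" using wit_coord[OF assms(1) bp] by simp
  qed
next
  assume "B \<subseteq> A" then show "face n A \<subseteq> face n B" unfolding face_def by auto
qed

lemma face_inj:
  assumes "admissible n A" "admissible n B" "face n A = face n B"
  shows "A = B"
  using face_sub_iff[OF assms(1,2)] face_sub_iff[OF assms(2,1)] assms(3) by auto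

lemma face_single: "face n {m} = facet n m" by (simp add: face_def)
lemma face_pair: "face n {a, b} = facet n a \<inter> facet n b" by (simp add: face_def)

lemma adm_single: "m \<in> pm n \<Longrightarrow> admissible n {m}"
  by (auto simp: admissible_def pm_iff)

lemma adm_pair: "a \<in> pm n \<Longrightarrow> b \<in> pm n \<Longrightarrow> \<bar>a\<bar> \<noteq> \<bar>b\<bar> \<Longrightarrow> admissible n {a, b}"
  by (auto simp: admissible_def pm_iff)

lemma face_facet_iff:
  assumes "admissible n T" "m \<in> pm n"
  shows "face n T \<subseteq> facet n m \<longleftrightarrow> m \<in> T"
  using face_sub_iff[OF assms(1) adm_single[OF assms(2)]] by (simp add: face_single)

lemma Xi_face: "admissible n T \<Longrightarrow> Xi n (face n T) = T"
  unfolding Xi_def using face_facet_iff by (auto simp: admissible_def)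

lemma finite_pm: "finite (pm n)"
  by (rule finite_subset[of _ "{-int n..int n}"]) (auto simp: pm_def)

lemma finite_proper_faces: "finite (proper_faces n)"
proof -
  have "proper_faces n \<subseteq> face n ` Pow (pm n)" unfolding proper_faces_def admissible_def by auto
  then show ?thesis using finite_pm by (meson finite_Pow_iff finite_imageI finite_subset)
qed

lemma face_nonempty: "admissible n A \<Longrightarrow> face n A \<noteq> {}"
  using wit_face by blast


lemma facet_neg_disj: "facet n m \<inter> facet n (-m) = {}"
  by (auto simp: facet_def pm_iff sgn_if split: if_splits)

lemma adm_subset: "admissible n T \<Longrightarrow> B \<subseteq> T \<Longrightarrow> B \<noteq> {} \<Longrightarrow> admissible n B"
  by (auto simp: admissible_def)

locale FPS =
  fixes n :: nat and \<omega> :: "int \<Rightarrow> int"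
    and \<tau> :: "int \<Rightarrow> (nat \<Rightarrow> real) \<Rightarrow> (nat \<Rightarrow> real)"
    and f :: "(nat \<Rightarrow> real) set"
  assumes FP: "facets_pairing n \<omega> \<tau>" and ST: "strong n \<omega> \<tau>" and fP: "f \<in> proper_faces n"
begin

lemmas FPD = FP[unfolded facets_pairing_def]

lemma om_pm: "j \<in> pm n \<Longrightarrow> \<omega> j \<in> pm n"
  using conjunct1[OF FPD] unfolding bij_betw_def by blast

lemma om_om: "j \<in> pm n \<Longrightarrow> \<omega> (\<omega> j) = j"
  using conjunct1[OF conjunct2[OF FPD]] by blast

lemma homeo: "j \<in> pm n \<Longrightarrow> homeomorphism (facet n j) (facet n (\<omega> j)) (\<tau> j) (\<tau> (\<omega> j))"
  using conjunct1[OF conjunct2[OF conjunct2[OF FPD]]] by blast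

lemma img: "j \<in> pm n \<Longrightarrow> g \<in> proper_faces n \<Longrightarrow> g \<subseteq> facet n j \<Longrightarrow>
   \<tau> j ` g \<in> proper_faces n \<and> \<tau> j ` g \<subseteq> facet n (\<omega> j)"
  using conjunct1[OF conjunct2[OF conjunct2[OF conjunct2[OF FPD]]]] by blast

lemma compat: "j \<in> pm n \<Longrightarrow> k \<in> pm n \<Longrightarrow> k' \<in> pm n \<Longrightarrow> j' \<in> pm n \<Longrightarrow>
   \<bar>j\<bar> \<noteq> \<bar>k\<bar> \<Longrightarrow> \<bar>k'\<bar> \<noteq> \<bar>\<omega> j\<bar> \<Longrightarrow> \<bar>j'\<bar> \<noteq> \<bar>\<omega> k\<bar> \<Longrightarrow>
   \<tau> j ` face n {j, k} = face n {\<omega> j, k'} \<Longrightarrow> \<tau> k ` face n {j, k} = face n {j', \<omega> k} \<Longrightarrow>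
   p \<in> face n {j, k} \<Longrightarrow> \<tau> k' (\<tau> j p) = \<tau> j' (\<tau> k p)"
proof -
  assume h: "j \<in> pm n" "k \<in> pm n" "k' \<in> pm n" "j' \<in> pm n"
   "\<bar>j\<bar> \<noteq> \<bar>k\<bar>" "\<bar>k'\<bar> \<noteq> \<bar>\<omega> j\<bar>" "\<bar>j'\<bar> \<noteq> \<bar>\<omega> k\<bar>"
   "\<tau> j ` face n {j, k} = face n {\<omega> j, k'}" "\<tau> k ` face n {j, k} = face n {j', \<omega> k}"
   "p \<in> face n {j, k}"
  note c = conjunct2[OF conjunct2[OF conjunct2[OF conjunct2[OF FPD]]]]
  show ?thesis using c[rule_format, OF h(1-4)] h(5-10) by blast
qed

lemma tau_inj: "j \<in> pm n \<Longrightarrow> inj_on (\<tau> j) (facet n j)"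
  using homeo unfolding homeomorphism_def by (metis inj_on_inverseI)

lemma tau_img_facet: "j \<in> pm n \<Longrightarrow> \<tau> j ` facet n j = facet n (\<omega> j)"
  using homeo unfolding homeomorphism_def by blast

lemma tau_inv_img: "k \<in> pm n \<Longrightarrow> h \<subseteq> facet n k \<Longrightarrow> \<tau> (\<omega> k) ` \<tau> k ` h = h"
proof -
  assume k: "k \<in> pm n" and h: "h \<subseteq> facet n k"
  have "\<forall>x\<in>facet n k. \<tau> (\<omega> k) (\<tau> k x) = x" using homeo[OF k] unfolding homeomorphism_def by blast
  then have "\<forall>x\<in>h. \<tau> (\<omega> k) (\<tau> k x) = x" using h by blast
  then show ?thesis by (simp add: image_image)
qed

lemma proper_obtain: "g \<in> proper_faces n \<Longrightarrow> \<exists>T. admissible n T \<and> g = face n T"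
  unfolding proper_faces_def by blast

lemma psi_pair:
  assumes j: "j \<in> pm n" and k: "k \<in> pm n" and jk: "\<bar>j\<bar> \<noteq> \<bar>k\<bar>"
  shows "\<exists>k'. k' \<in> pm n \<and> \<bar>k'\<bar> \<noteq> \<bar>\<omega> j\<bar> \<and> \<tau> j ` face n {j, k} = face n {\<omega> j, k'}
            \<and> Psi n \<omega> \<tau> j k = k'"
proof -
  define A where "A = {j, k}"
  define wj where "wj = \<omega> j"
  have admA: "admissible n A" unfolding A_def using adm_pair[OF j k jk] .
  have fA: "face n A \<in> proper_faces n" using admA unfolding proper_faces_def by blast
  have subA: "face n A \<subseteq> facet n j" unfolding A_def face_pair by blast
  have wj: "wj \<in> pm n" unfolding wj_def using om_pm[OF j] .
  have wwj: "\<omega> wj = j" unfolding wj_def using om_om[OF j] .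
  obtain T where admT: "admissible n T" and T: "\<tau> j ` face n A = face n T"
    using img[OF j fA subA] proper_obtain by blast
  have "face n T \<subseteq> facet n wj" using img[OF j fA subA] T wj_def by simp
  then have wjT: "wj \<in> T" using face_facet_iff[OF admT wj] by simp
  have injj: "inj_on (\<tau> j) (facet n j)" using tau_inj[OF j] .
  have injw: "inj_on (\<tau> wj) (facet n wj)" using tau_inj[OF wj] .
  have "T \<noteq> {wj}"
  proof
    assume "T = {wj}"
    then have "face n T = \<tau> j ` facet n j" using tau_img_facet[OF j] face_single wj_def by simp
    then have "\<tau> j ` face n A = \<tau> j ` facet n j" using T by simp
    then have "face n A = facet n j" using inj_on_image_eq_iff[OF injj subA] by simp
    then have "face n A = face n {j}" by (simp add: face_single)
    then have "A = {j}" using face_inj[OF admA adm_single[OF j]] by simp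
    then show False using jk unfolding A_def by auto
  qed
  then obtain k' where k'T: "k' \<in> T" and k'ne: "k' \<noteq> wj" using wjT by blast
  define B where "B = {wj, k'}"
  have admB: "admissible n B" unfolding B_def using adm_subset[OF admT] wjT k'T by auto
  have TB: "T = B"
  proof (rule ccontr)
    assume TB: "T \<noteq> B"
    have BT: "B \<subseteq> T" unfolding B_def using wjT k'T by auto
    have sTB: "face n T \<subseteq> face n B" using face_sub_iff[OF admT admB] BT by simp
    have fB: "face n B \<in> proper_faces n" using admB unfolding proper_faces_def by blast
    have sBw: "face n B \<subseteq> facet n wj" unfolding B_def face_pair by blast
    obtain U where admU: "admissible n U" and U: "\<tau> wj ` face n B = face n U"
      using img[OF wj fB sBw] proper_obtain by blast
    have "face n U \<subseteq> facet n j" using img[OF wj fB sBw] U wwj by simp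
    then have jU: "j \<in> U" using face_facet_iff[OF admU j] by simp
    have bk: "\<tau> wj ` face n T = face n A" using tau_inv_img[OF j subA] T wj_def by simp
    have "face n A \<subseteq> face n U" using bk U sTB by blast
    then have UA: "U \<subseteq> A" using face_sub_iff[OF admA admU] by simp
    have sTw: "face n T \<subseteq> facet n wj" using sTB sBw by blast
    show False
    proof (cases "U = A")
      case True
      then have "\<tau> wj ` face n B = \<tau> wj ` face n T" using U bk by simp
      then have "face n B = face n T" using inj_on_image_eq_iff[OF injw sBw sTw] by simp
      then show False using face_inj[OF admB admT] TB by simp
    next
      case False
      then have "U = {j}" using UA jU unfolding A_def by auto
      then have "\<tau> wj ` face n B = \<tau> wj ` facet n wj"
        using U tau_img_facet[OF wj] wwj face_single by simp
      then have "face n B = facet n wj" using inj_on_image_eq_iff[OF injw sBw] by simp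
      then have "B = {wj}" using face_inj[OF admB adm_single[OF wj]] face_single by metis
      then show False using k'ne unfolding B_def by auto
    qed
  qed
  have k'pm: "k' \<in> pm n" using admT k'T unfolding admissible_def by auto
  have "- wj \<notin> T" using admT wjT unfolding admissible_def by auto
  then have "k' \<noteq> - wj" using k'T by auto
  then have k'abs: "\<bar>k'\<bar> \<noteq> \<bar>wj\<bar>" using k'ne by arith
  have Timg: "\<tau> j ` face n {j, k} = face n {\<omega> j, k'}" using T TB unfolding A_def B_def wj_def by simp
  have kj: "k \<noteq> j" using jk by auto
  have eq: "\<tau> j ` (facet n k \<inter> facet n j) = facet n k' \<inter> facet n wj"
    using Timg unfolding face_pair wj_def by (simp add: Int_commute)
  have theq: "(THE g. g \<in> pm n \<and> facet n g \<inter> facet n (\<omega> j) = \<tau> j ` (facet n k \<inter> facet n j)) = k'"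
  proof (rule the_equality)
    show "k' \<in> pm n \<and> facet n k' \<inter> facet n (\<omega> j) = \<tau> j ` (facet n k \<inter> facet n j)"
      using k'pm eq wj_def by simp
  next
    fix g assume g: "g \<in> pm n \<and> facet n g \<inter> facet n (\<omega> j) = \<tau> j ` (facet n k \<inter> facet n j)"
    then have geq: "face n {g, wj} = face n B" using eq unfolding face_pair B_def wj_def by (simp add: Int_commute)
    have neB: "face n B \<noteq> {}" using face_nonempty[OF admB] .
    show "g = k'"
    proof (cases "\<bar>g\<bar> = \<bar>wj\<bar>")
      case True
      then have "g = wj \<or> g = - wj" by arith
      then show ?thesis
      proof
        assume "g = wj"
        then have "face n {wj} = face n B" using geq by simp
        then have "{wj} = B" using face_inj[OF adm_single[OF wj] admB] by simp
        then show ?thesis using k'ne unfolding B_def by auto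
      next
        assume "g = - wj"
        then have "face n {g, wj} = {}" unfolding face_pair using facet_neg_disj[of n wj] by auto
        then show ?thesis using geq neB by simp
      qed
    next
      case False
      have "admissible n {g, wj}" using adm_pair[OF _ wj False] g by simp
      then have "{g, wj} = B" using face_inj[OF _ admB] geq by simp
      then show ?thesis unfolding B_def using False by auto
    qed
  qed
  have "Psi n \<omega> \<tau> j k = k'" unfolding Psi_def using kj theq by simp
  then show ?thesis using k'pm k'abs Timg wj_def by blast
qed

end

lemma valid_snoc: "valid n \<tau> h (ks @ [k]) \<longleftrightarrow> valid n \<tau> h ks \<and> k \<in> pm n \<and> comp_tau \<tau> ks ` h \<subseteq> facet n k"
  by (induction ks arbitrary: h) (auto simp: image_image)

lemma comp_tau_snoc: "comp_tau \<tau> (ks @ [k]) p = \<tau> k (comp_tau \<tau> ks p)"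
  by (induction ks arbitrary: p) auto

lemma comp_Psi_snoc: "comp_Psi n \<omega> \<tau> (ks @ [k]) p = Psi n \<omega> \<tau> k (comp_Psi n \<omega> \<tau> ks p)"
  by (induction ks arbitrary: p) auto

lemma comp_tau_snoc_img: "comp_tau \<tau> (ks @ [k]) ` h = \<tau> k ` comp_tau \<tau> ks ` h"
  by (simp add: comp_tau_snoc image_image)

lemma comp_tau_nil_img: "comp_tau \<tau> [] ` h = h" by simp

lemma comp_Psi_nil: "comp_Psi n \<omega> \<tau> [] = (\<lambda>j. j)" by (rule ext) simp

lemma finite_Xi: "finite (Xi n g)"
  by (rule finite_subset[OF _ finite_pm[of n]]) (auto simp: Xi_def)

context FPS
begin

lemma G0:
  assumes gP: "g \<in> proper_faces n" and k: "k \<in> pm n" and gk: "g \<subseteq> facet n k"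
  shows "Psi n \<omega> \<tau> k ` Xi n g \<subseteq> Xi n (\<tau> k ` g) \<and> inj_on (Psi n \<omega> \<tau> k) (Xi n g)"
proof -
  obtain T where admT: "admissible n T" and gT: "g = face n T" using proper_obtain[OF gP] by blast
  have XT: "Xi n g = T" using Xi_face[OF admT] gT by simp
  have kT: "k \<in> T" using face_facet_iff[OF admT k] gk gT by simp
  obtain T' where admT': "admissible n T'" and gT': "\<tau> k ` g = face n T'"
    using proper_obtain[OF conjunct1[OF img[OF k gP gk]]] by blast
  have XT': "Xi n (\<tau> k ` g) = T'" using Xi_face[OF admT'] gT' by simp
  have sw: "\<tau> k ` g \<subseteq> facet n (\<omega> k)" using img[OF k gP gk] by blast
  have Pkk: "Psi n \<omega> \<tau> k k = \<omega> k" by (simp add: Psi_def)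
  have wT': "\<omega> k \<in> T'" using face_facet_iff[OF admT' om_pm[OF k]] sw gT' by simp
  have abs_ne: "\<bar>j\<bar> \<noteq> \<bar>k\<bar>" if "j \<in> T" "j \<noteq> k" for j
  proof -
    have "j \<noteq> - k" using admT kT that(1) unfolding admissible_def by auto
    then show ?thesis using that(2) by arith
  qed
  have jpm: "j \<in> pm n" if "j \<in> T" for j using admT that unfolding admissible_def by auto
  have P: "\<tau> k ` face n {k, j} = face n {\<omega> k, Psi n \<omega> \<tau> k j} \<and> Psi n \<omega> \<tau> k j \<in> pm n
      \<and> \<bar>Psi n \<omega> \<tau> k j\<bar> \<noteq> \<bar>\<omega> k\<bar>" if jT: "j \<in> T" and jk: "j \<noteq> k" for j
  proof -
    obtain k' where "k' \<in> pm n" "\<bar>k'\<bar> \<noteq> \<bar>\<omega> k\<bar>" "\<tau> k ` face n {k, j} = face n {\<omega> k, k'}"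
      "Psi n \<omega> \<tau> k j = k'" using psi_pair[OF k jpm[OF jT] abs_ne[OF jT jk, THEN not_sym]] by blast
    then show ?thesis by simp
  qed
  have sub1: "Psi n \<omega> \<tau> k j \<in> T'" if j: "j \<in> T" for j
  proof (cases "j = k")
    case True then show ?thesis using Pkk wT' by simp
  next
    case False
    have admkj: "admissible n {k, j}" using adm_pair[OF k jpm[OF j] abs_ne[OF j False, THEN not_sym]] .
    have "g \<subseteq> face n {k, j}" using face_sub_iff[OF admT admkj] kT j gT by simp
    then have "\<tau> k ` g \<subseteq> face n {\<omega> k, Psi n \<omega> \<tau> k j}" using P[OF j False] by blast
    then have "face n T' \<subseteq> facet n (Psi n \<omega> \<tau> k j)" using gT' face_pair by auto
    moreover have "Psi n \<omega> \<tau> k j \<in> pm n" using P[OF j False] by blast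
    ultimately show ?thesis using face_facet_iff[OF admT'] by blast
  qed
  have inj: "inj_on (Psi n \<omega> \<tau> k) T"
  proof (rule inj_onI)
    fix j1 j2 assume j1: "j1 \<in> T" and j2: "j2 \<in> T" and eq: "Psi n \<omega> \<tau> k j1 = Psi n \<omega> \<tau> k j2"
    show "j1 = j2"
    proof (cases "j1 = k")
      case True
      show ?thesis
      proof (rule ccontr)
        assume "j1 \<noteq> j2"
        then have "j2 \<noteq> k" using True by simp
        then have "\<bar>Psi n \<omega> \<tau> k j2\<bar> \<noteq> \<bar>\<omega> k\<bar>" using P[OF j2] by blast
        then show False using eq True Pkk by simp
      qed
    next
      case F1: False
      show ?thesis
      proof (cases "j2 = k")
        case True
        have "\<bar>Psi n \<omega> \<tau> k j1\<bar> \<noteq> \<bar>\<omega> k\<bar>" using P[OF j1 F1] by blast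
        then show ?thesis using eq True Pkk by simp
      next
        case F2: False
        have "\<tau> k ` face n {k, j1} = \<tau> k ` face n {k, j2}" using P[OF j1 F1] P[OF j2 F2] eq by simp
        moreover have "face n {k, j1} \<subseteq> facet n k" "face n {k, j2} \<subseteq> facet n k" by (auto simp: face_pair)
        ultimately have "face n {k, j1} = face n {k, j2}" using inj_on_image_eq_iff[OF tau_inj[OF k]] by blast
        then have "{k, j1} = {k, j2}"
          using face_inj[OF adm_pair[OF k jpm[OF j1] abs_ne[OF j1 F1, THEN not_sym]] adm_pair[OF k jpm[OF j2] abs_ne[OF j2 F2, THEN not_sym]]]
          by blast
        then show ?thesis using F1 F2 by blast
      qed
    qed
  qed
  have "Psi n \<omega> \<tau> k ` Xi n g \<subseteq> Xi n (\<tau> k ` g)" unfolding XT XT' using sub1 by blast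
  then show ?thesis using inj XT by simp
qed

lemma G:
  assumes gP: "g \<in> proper_faces n" and k: "k \<in> pm n" and gk: "g \<subseteq> facet n k"
  shows "\<tau> k ` g \<in> proper_faces n \<and> bij_betw (Psi n \<omega> \<tau> k) (Xi n g) (Xi n (\<tau> k ` g))"
proof -
  have g'P: "\<tau> k ` g \<in> proper_faces n" and sw: "\<tau> k ` g \<subseteq> facet n (\<omega> k)" using img[OF k gP gk] by auto
  have wk: "\<omega> k \<in> pm n" using om_pm[OF k] .
  have bk: "\<tau> (\<omega> k) ` \<tau> k ` g = g" using tau_inv_img[OF k gk] .
  note A1 = G0[OF gP k gk]
  note A2 = G0[OF g'P wk sw, unfolded bk]
  have c1: "card (Xi n g) \<le> card (Xi n (\<tau> k ` g))" using card_inj_on_le A1 finite_Xi by blast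
  have c2: "card (Xi n (\<tau> k ` g)) \<le> card (Xi n g)" using card_inj_on_le A2 finite_Xi by blast
  have "card (Psi n \<omega> \<tau> k ` Xi n g) = card (Xi n (\<tau> k ` g))" using card_image[OF conjunct2[OF A1]] c1 c2 by simp
  then have "Psi n \<omega> \<tau> k ` Xi n g = Xi n (\<tau> k ` g)" using card_subset_eq[OF finite_Xi] A1 by blast
  then show ?thesis using g'P A1 unfolding bij_betw_def by blast
qed

lemma K: "valid n \<tau> f ks \<Longrightarrow> comp_tau \<tau> ks ` f \<in> proper_faces n \<and>
   bij_betw (comp_Psi n \<omega> \<tau> ks) (Xi n f) (Xi n (comp_tau \<tau> ks ` f))"
proof (induction ks rule: rev_induct)
  case Nil
  then show ?case using fP by (simp add: comp_Psi_nil bij_betw_id[unfolded id_def])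
next
  case (snoc k ks)
  have v: "valid n \<tau> f ks" and k: "k \<in> pm n" and s: "comp_tau \<tau> ks ` f \<subseteq> facet n k"
    using snoc.prems valid_snoc by blast+
  note IH = snoc.IH[OF v]
  note GG = G[OF conjunct1[OF IH] k s]
  have e: "comp_Psi n \<omega> \<tau> (ks @ [k]) = Psi n \<omega> \<tau> k \<circ> comp_Psi n \<omega> \<tau> ks"
    by (rule ext) (simp add: comp_Psi_snoc)
  show ?case unfolding comp_tau_snoc_img e using GG conjunct2[OF IH] bij_betw_trans by blast
qed

definition Fam where "Fam = face_family n \<tau> f"
definition Lab where "Lab g = comp_Psi n \<omega> \<tau> (SOME ks. valid n \<tau> f ks \<and> comp_tau \<tau> ks ` f = g)"
definition mv where "mv i g = \<tau> (Lab g i) ` g"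
abbreviation S0 where "S0 \<equiv> Xi n f"

lemma Fam_iff: "g \<in> Fam \<longleftrightarrow> (\<exists>ks. valid n \<tau> f ks \<and> g = comp_tau \<tau> ks ` f)"
  unfolding Fam_def face_family_def by blast

lemma strongD: "valid n \<tau> f ks \<Longrightarrow> valid n \<tau> f ls \<Longrightarrow> comp_tau \<tau> ks ` f = comp_tau \<tau> ls ` f \<Longrightarrow>
   j \<in> Xi n f \<Longrightarrow> comp_Psi n \<omega> \<tau> ks j = comp_Psi n \<omega> \<tau> ls j"
proof -
  assume v1: "valid n \<tau> f ks" and v2: "valid n \<tau> f ls" and e: "comp_tau \<tau> ks ` f = comp_tau \<tau> ls ` f"
    and j: "j \<in> Xi n f"
  note H = bspec[OF ST[unfolded strong_def] fP]
  have "\<forall>j\<in>Xi n f. comp_Psi n \<omega> \<tau> ks j = comp_Psi n \<omega> \<tau> ls j"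
    using conjunct2[OF H[rule_format, OF conjI[OF v1 conjI[OF v2 e]]]] .
  then show ?thesis using j by blast
qed

lemma Lab_eq: "valid n \<tau> f ks \<Longrightarrow> i \<in> S0 \<Longrightarrow> Lab (comp_tau \<tau> ks ` f) i = comp_Psi n \<omega> \<tau> ks i"
proof -
  assume v: "valid n \<tau> f ks" and i: "i \<in> S0"
  define ls where "ls = (SOME ls. valid n \<tau> f ls \<and> comp_tau \<tau> ls ` f = comp_tau \<tau> ks ` f)"
  have "valid n \<tau> f ls \<and> comp_tau \<tau> ls ` f = comp_tau \<tau> ks ` f"
    unfolding ls_def by (rule someI_ex) (use v in blast)
  then have "comp_Psi n \<omega> \<tau> ls i = comp_Psi n \<omega> \<tau> ks i" using strongD[of ls ks i] v i by blast
  then show ?thesis unfolding Lab_def ls_def[symmetric] by simp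
qed

lemma f_Fam: "f \<in> Fam"
proof -
  have "valid n \<tau> f [] \<and> f = comp_tau \<tau> [] ` f" by simp
  then show ?thesis unfolding Fam_iff by blast
qed

lemma Fam_proper: "g \<in> Fam \<Longrightarrow> g \<in> proper_faces n"
proof -
  assume "g \<in> Fam"
  then obtain ks where v: "valid n \<tau> f ks" and g: "g = comp_tau \<tau> ks ` f" using Fam_iff by blast
  show ?thesis using conjunct1[OF K[OF v]] g by simp
qed

lemma Lab_bij: "g \<in> Fam \<Longrightarrow> bij_betw (Lab g) S0 (Xi n g)"
proof -
  assume "g \<in> Fam"
  then obtain ks where v: "valid n \<tau> f ks" and g: "g = comp_tau \<tau> ks ` f" using Fam_iff by blast
  have "bij_betw (comp_Psi n \<omega> \<tau> ks) S0 (Xi n g)" using K[OF v] g by simp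
  then show ?thesis using bij_betw_cong[of S0 "Lab g" "comp_Psi n \<omega> \<tau> ks"] Lab_eq[OF v] g by simp
qed

lemma mv_Fam:
  assumes g: "g \<in> Fam" and i: "i \<in> S0"
  shows "mv i g \<in> Fam \<and> (\<forall>l\<in>S0. Lab (mv i g) l = Psi n \<omega> \<tau> (Lab g i) (Lab g l))"
proof -
  obtain ks where v: "valid n \<tau> f ks" and gk: "g = comp_tau \<tau> ks ` f" using g Fam_iff by blast
  define k where "k = Lab g i"
  have "k \<in> Xi n g" using Lab_bij[OF g] i unfolding k_def bij_betw_def by blast
  then have k: "k \<in> pm n" and s: "g \<subseteq> facet n k" unfolding Xi_def by auto
  have v2: "valid n \<tau> f (ks @ [k])" using valid_snoc v k s gk by blast
  have m0: "mv i g = \<tau> k ` g" by (simp add: mv_def k_def)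
  have m: "mv i g = comp_tau \<tau> (ks @ [k]) ` f" using m0 gk by (simp add: comp_tau_snoc_img)
  have "mv i g \<in> Fam" using m v2 Fam_iff by blast
  moreover have "\<forall>l\<in>S0. Lab (mv i g) l = Psi n \<omega> \<tau> k (Lab g l)"
  proof
    fix l assume l: "l \<in> S0"
    have "Lab (mv i g) l = comp_Psi n \<omega> \<tau> (ks @ [k]) l" using Lab_eq[OF v2 l] m by simp
    also have "\<dots> = Psi n \<omega> \<tau> k (comp_Psi n \<omega> \<tau> ks l)" by (rule comp_Psi_snoc)
    also have "\<dots> = Psi n \<omega> \<tau> k (Lab g l)" using Lab_eq[OF v l] gk by simp
    finally show "Lab (mv i g) l = Psi n \<omega> \<tau> k (Lab g l)" .
  qed
  ultimately show ?thesis unfolding k_def by blast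
qed

lemma mv_mv:
  assumes g: "g \<in> Fam" and i: "i \<in> S0"
  shows "mv i (mv i g) = g"
proof -
  define k where "k = Lab g i"
  have "k \<in> Xi n g" using Lab_bij[OF g] i unfolding k_def bij_betw_def by blast
  then have k: "k \<in> pm n" and s: "g \<subseteq> facet n k" unfolding Xi_def by auto
  have "Lab (mv i g) i = \<omega> k" using mv_Fam[OF g i] i unfolding k_def by (simp add: Psi_def)
  then have "mv i (mv i g) = \<tau> (\<omega> k) ` \<tau> k ` g" unfolding mv_def k_def by simp
  then show ?thesis using tau_inv_img[OF k s] by simp
qed

lemma mv_comm:
  assumes g: "g \<in> Fam" and i: "i \<in> S0" and l: "l \<in> S0" and il: "i \<noteq> l"
  shows "mv i (mv l g) = mv l (mv i g)"
proof -
  define k where "k = Lab g i"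
  define j where "j = Lab g l"
  have B: "bij_betw (Lab g) S0 (Xi n g)" using Lab_bij[OF g] .
  have kX: "k \<in> Xi n g" using B i unfolding k_def bij_betw_def by blast
  have jX: "j \<in> Xi n g" using B l unfolding j_def bij_betw_def by blast
  have jk: "j \<noteq> k" using B i l il unfolding j_def k_def bij_betw_def inj_on_def by blast
  obtain T where admT: "admissible n T" and gT: "g = face n T" using proper_obtain[OF Fam_proper[OF g]] by blast
  have XT: "Xi n g = T" using Xi_face[OF admT] gT by simp
  have kp: "k \<in> pm n" and jp: "j \<in> pm n" using kX jX unfolding Xi_def by auto
  have "j \<noteq> - k" using admT kX jX XT unfolding admissible_def by auto
  then have ab: "\<bar>j\<bar> \<noteq> \<bar>k\<bar>" using jk by arith
  obtain k' where k': "k' \<in> pm n" "\<bar>k'\<bar> \<noteq> \<bar>\<omega> j\<bar>" "\<tau> j ` face n {j, k} = face n {\<omega> j, k'}"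
      "Psi n \<omega> \<tau> j k = k'" using psi_pair[OF jp kp ab] by blast
  obtain j' where j': "j' \<in> pm n" "\<bar>j'\<bar> \<noteq> \<bar>\<omega> k\<bar>" "\<tau> k ` face n {k, j} = face n {\<omega> k, j'}"
      "Psi n \<omega> \<tau> k j = j'" using psi_pair[OF kp jp] ab by metis
  have j'2: "\<tau> k ` face n {j, k} = face n {j', \<omega> k}" using j'(3) by (simp add: insert_commute)
  have L1: "Lab (mv l g) i = k'" using mv_Fam[OF g l] i k'(4) unfolding j_def k_def by simp
  have L2: "Lab (mv i g) l = j'" using mv_Fam[OF g i] l j'(4) unfolding j_def k_def by simp
  have e1: "mv i (mv l g) = (\<lambda>p. \<tau> k' (\<tau> j p)) ` g"
    unfolding mv_def[of i] L1 unfolding mv_def j_def[symmetric] by (simp add: image_image)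
  have e2: "mv l (mv i g) = (\<lambda>p. \<tau> j' (\<tau> k p)) ` g"
    unfolding mv_def[of l] L2 unfolding mv_def k_def[symmetric] by (simp add: image_image)
  have sub: "g \<subseteq> face n {j, k}" unfolding face_pair using kX jX unfolding Xi_def by auto
  have H: "\<tau> k' (\<tau> j p) = \<tau> j' (\<tau> k p)" if "p \<in> g" for p
    using compat[OF jp kp k'(1) j'(1) ab k'(2) j'(2) k'(3) j'2] sub that by blast
  show ?thesis unfolding e1 e2 by (rule image_cong[OF refl H])
qed

inductive reach :: "int set \<Rightarrow> (nat \<Rightarrow> real) set \<Rightarrow> (nat \<Rightarrow> real) set \<Rightarrow> bool" for A where
  rrefl: "g \<in> Fam \<Longrightarrow> reach A g g"
| rstep: "reach A g h \<Longrightarrow> i \<in> A \<Longrightarrow> reach A g (mv i h)"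

lemma reach_Fam: "reach A g h \<Longrightarrow> A \<subseteq> S0 \<Longrightarrow> g \<in> Fam \<and> h \<in> Fam"
proof (induction rule: reach.induct)
  case (rrefl g) then show ?case by simp
next
  case (rstep g h i)
  then have "h \<in> Fam" "i \<in> S0" by auto
  then show ?case using conjunct1[OF mv_Fam] rstep by blast
qed

lemma reach_trans: "reach A h x \<Longrightarrow> reach A g h \<Longrightarrow> reach A g x"
  by (induction rule: reach.induct) (auto intro: reach.rstep)

lemma reach_sym: "reach A g h \<Longrightarrow> A \<subseteq> S0 \<Longrightarrow> reach A h g"
proof (induction rule: reach.induct)
  case (rrefl g) then show ?case by (blast intro: reach.rrefl)
next
  case (rstep g h i)
  have hF: "h \<in> Fam" using reach_Fam[OF rstep.hyps(1) rstep.prems] by blast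
  have iS: "i \<in> S0" using rstep.hyps(2) rstep.prems by blast
  have "reach A (mv i h) (mv i (mv i h))"
    using reach.rstep[OF reach.rrefl[OF conjunct1[OF mv_Fam[OF hF iS]]] rstep.hyps(2)] .
  then have "reach A (mv i h) h" using mv_mv[OF hF iS] by simp
  then show ?case using reach_trans rstep.IH rstep.prems by blast
qed

lemma reach_mono: "reach A g h \<Longrightarrow> A \<subseteq> B \<Longrightarrow> reach B g h"
  by (induction rule: reach.induct) (auto intro: reach.intros)

lemma reach_mv: "reach A g h \<Longrightarrow> A \<subseteq> S0 \<Longrightarrow> i \<in> S0 \<Longrightarrow> reach A (mv i g) (mv i h)"
proof (induction rule: reach.induct)
  case (rrefl g)
  have "mv i g \<in> Fam" using conjunct1[OF mv_Fam[OF rrefl.hyps rrefl.prems(2)]] .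
  then show ?case by (rule reach.rrefl)
next
  case (rstep g h l)
  have hF: "h \<in> Fam" using reach_Fam[OF rstep.hyps(1) rstep.prems(1)] by blast
  have lS: "l \<in> S0" using rstep.hyps(2) rstep.prems by blast
  have "mv l (mv i h) = mv i (mv l h)" using mv_comm[OF hF rstep.prems(2) lS] by (cases "i = l") auto
  then show ?case using reach.rstep[OF rstep.IH[OF rstep.prems] rstep.hyps(2)] by simp
qed

definition R where "R A g = {h. reach A g h}"

lemma R_sub: "A \<subseteq> S0 \<Longrightarrow> R A g \<subseteq> Fam" unfolding R_def using reach_Fam by blast

lemma R_finite: "A \<subseteq> S0 \<Longrightarrow> finite (R A g)"
proof -
  assume A: "A \<subseteq> S0"
  have "Fam \<subseteq> proper_faces n" using Fam_proper by blast
  then have "finite Fam" using finite_subset finite_proper_faces by blast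
  then show ?thesis using finite_subset[OF R_sub[OF A]] by blast
qed

lemma R_img: "A \<subseteq> S0 \<Longrightarrow> i \<in> S0 \<Longrightarrow> g \<in> Fam \<Longrightarrow> mv i ` R A g = R A (mv i g)"
proof
  assume A: "A \<subseteq> S0" and i: "i \<in> S0" and g: "g \<in> Fam"
  show "mv i ` R A g \<subseteq> R A (mv i g)" unfolding R_def using reach_mv A i by blast
  show "R A (mv i g) \<subseteq> mv i ` R A g"
  proof
    fix h assume "h \<in> R A (mv i g)"
    then have r: "reach A (mv i g) h" unfolding R_def by blast
    have hF: "h \<in> Fam" using reach_Fam[OF r A] by blast
    have "reach A (mv i (mv i g)) (mv i h)" using reach_mv[OF r A i] .
    then have "mv i h \<in> R A g" using mv_mv[OF g i] unfolding R_def by simp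
    then show "h \<in> mv i ` R A g" using mv_mv[OF hF i] by (metis image_eqI)
  qed
qed

lemma R_insert:
  assumes A: "A \<subseteq> S0" and i: "i \<in> S0" and g: "g \<in> Fam"
  shows "R (insert i A) g = R A g \<union> R A (mv i g)"
proof
  show "R A g \<union> R A (mv i g) \<subseteq> R (insert i A) g"
  proof
    fix h assume "h \<in> R A g \<union> R A (mv i g)"
    then show "h \<in> R (insert i A) g"
    proof
      assume "h \<in> R A g" then show ?thesis unfolding R_def using reach_mono by blast
    next
      assume "h \<in> R A (mv i g)"
      then have r: "reach (insert i A) (mv i g) h" unfolding R_def using reach_mono by blast
      have "reach (insert i A) g (mv i g)" using reach.rstep[OF reach.rrefl[OF g]] by blast
      then show ?thesis using reach_trans r unfolding R_def by blast
    qed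
  qed
next
  have A2: "insert i A \<subseteq> S0" using A i by blast
  have "reach (insert i A) g h \<Longrightarrow> h \<in> R A g \<union> R A (mv i g)" for h
  proof (induction rule: reach.induct)
    case (rrefl g) then show ?case unfolding R_def by (blast intro: reach.rrefl)
  next
    case (rstep g h l)
    have gF: "g \<in> Fam" and hF: "h \<in> Fam" using reach_Fam[OF rstep.hyps(1) A2] by auto
    show ?case
    proof (cases "l \<in> A")
      case True
      then show ?thesis using rstep.IH unfolding R_def by (blast intro: reach.rstep)
    next
      case False
      then have li: "l = i" using rstep.hyps(2) by blast
      from rstep.IH show ?thesis
      proof
        assume "h \<in> R A g"
        then have "mv i h \<in> R A (mv i g)" using R_img[OF A i gF] by blast
        then show ?thesis using li by blast
      next
        assume "h \<in> R A (mv i g)"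
        then have "mv i h \<in> R A (mv i (mv i g))" using R_img[OF A i conjunct1[OF mv_Fam[OF gF i]]] by blast
        then show ?thesis using li mv_mv[OF gF i] by simp
      qed
    qed
  qed
  then show "R (insert i A) g \<subseteq> R A g \<union> R A (mv i g)" unfolding R_def by blast
qed

lemma R_eq: "A \<subseteq> S0 \<Longrightarrow> x \<in> R A g \<Longrightarrow> x \<in> R A g' \<Longrightarrow> R A g = R A g'"
proof -
  assume A: "A \<subseteq> S0" and "x \<in> R A g" "x \<in> R A g'"
  then have r1: "reach A g x" and r2: "reach A g' x" unfolding R_def by auto
  have "reach A g g'" using reach_trans[OF reach_sym[OF r2 A] r1] .
  moreover have "reach A g' g" using reach_sym[OF calculation A] .
  ultimately show ?thesis unfolding R_def using reach_trans by blast
qed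

lemma R_empty: "g \<in> Fam \<Longrightarrow> R {} g = {g}"
proof -
  assume g: "g \<in> Fam"
  have "reach {} g h \<Longrightarrow> h = g" for h by (induction rule: reach.induct) auto
  then show ?thesis unfolding R_def using reach.rrefl[OF g] by blast
qed

lemma R_pow: "finite A \<Longrightarrow> A \<subseteq> S0 \<Longrightarrow> \<forall>g\<in>Fam. \<exists>m. card (R A g) = 2 ^ m"
proof (induction rule: finite_induct)
  case empty
  show ?case
  proof
    fix g assume "g \<in> Fam"
    then have "card (R {} g) = 2 ^ 0" using R_empty by simp
    then show "\<exists>m. card (R {} g) = 2 ^ m" by blast
  qed
next
  case (insert i A)
  have A: "A \<subseteq> S0" and i: "i \<in> S0" using insert.prems by auto
  show ?case
  proof
    fix g assume g: "g \<in> Fam"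
    obtain m where m: "card (R A g) = 2 ^ m" using insert.IH[OF A] g by blast
    have g': "mv i g \<in> Fam" using mv_Fam[OF g i] by blast
    have injF: "inj_on (mv i) Fam"
    proof (rule inj_onI)
      fix x y assume x: "x \<in> Fam" and y: "y \<in> Fam" and e: "mv i x = mv i y"
      have "x = mv i (mv i x)" using mv_mv[OF x i] by simp
      also have "\<dots> = mv i (mv i y)" using e by simp
      also have "\<dots> = y" using mv_mv[OF y i] .
      finally show "x = y" .
    qed
    have ci: "card (mv i ` R A g) = card (R A g)" using card_image[OF inj_on_subset[OF injF R_sub[OF A]]] .
    have "card (R A (mv i g)) = card (R A g)" using ci R_img[OF A i g] by simp
    show "\<exists>m. card (R (insert i A) g) = 2 ^ m"
    proof (cases "R A g \<inter> R A (mv i g) = {}")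
      case True
      then have "card (R (insert i A) g) = card (R A g) + card (R A (mv i g))"
        using R_insert[OF A i g] card_Un_disjoint[OF R_finite[OF A] R_finite[OF A] True] by simp
      then have "card (R (insert i A) g) = 2 ^ Suc m" using m \<open>card (R A (mv i g)) = card (R A g)\<close> by simp
      then show ?thesis by blast
    next
      case False
      then have "R A g = R A (mv i g)" using R_eq[OF A] by blast
      then show ?thesis using R_insert[OF A i g] m by auto
    qed
  qed
qed

lemma Fam_R: "Fam = R S0 f"
proof
  show "R S0 f \<subseteq> Fam" using R_sub by blast
  have "valid n \<tau> f ks \<Longrightarrow> reach S0 f (comp_tau \<tau> ks ` f)" for ks
  proof (induction ks rule: rev_induct)
    case Nil then show ?case using reach.rrefl[OF f_Fam] by simp
  next
    case (snoc k ks)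
    have v: "valid n \<tau> f ks" and k: "k \<in> pm n" and s: "comp_tau \<tau> ks ` f \<subseteq> facet n k"
      using snoc.prems valid_snoc by blast+
    define g where "g = comp_tau \<tau> ks ` f"
    have gF: "g \<in> Fam" unfolding Fam_iff g_def using v by blast
    have "k \<in> Xi n g" using k s g_def unfolding Xi_def by blast
    then obtain i where i: "i \<in> S0" and ki: "k = Lab g i" using Lab_bij[OF gF] unfolding bij_betw_def by blast
    have e: "comp_tau \<tau> (ks @ [k]) ` f = \<tau> k ` g" by (simp add: comp_tau_snoc_img g_def)
    have mm: "mv i g = \<tau> k ` g" by (simp add: mv_def ki)
    have "reach S0 f (mv i g)" using reach.rstep[OF snoc.IH[OF v] i] unfolding g_def .
    then show ?case using e mm by simp
  qed
  then show "Fam \<subseteq> R S0 f"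
  proof -
    assume H: "\<And>ks. valid n \<tau> f ks \<Longrightarrow> reach S0 f (comp_tau \<tau> ks ` f)"
    show "Fam \<subseteq> R S0 f"
    proof
      fix g assume "g \<in> Fam"
      then obtain ks where v: "valid n \<tau> f ks" and g: "g = comp_tau \<tau> ks ` f" using Fam_iff by blast
      show "g \<in> R S0 f" unfolding R_def g using H[OF v] by simp
    qed
  qed
qed

lemma main: "\<exists>m. card (face_family n \<tau> f) = 2 ^ m"
proof -
  obtain m where m: "card (R S0 f) = 2 ^ m" using bspec[OF R_pow[OF finite_Xi subset_refl] f_Fam] by blast
  have "card (face_family n \<tau> f) = card (R S0 f)" using Fam_R unfolding Fam_def by simp
  then show ?thesis using m by simp
qed

end
theorem mainTheorem6:
  fixes n :: nat and \<omega> :: "int \<Rightarrow> int"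
    and \<tau> :: "int \<Rightarrow> (nat \<Rightarrow> real) \<Rightarrow> (nat \<Rightarrow> real)"
    and f :: "(nat \<Rightarrow> real) set"
  assumes "facets_pairing n \<omega> \<tau>" and "regular n \<omega> \<tau>" and "strong n \<omega> \<tau>"
    and "f \<in> proper_faces n"
  shows "\<exists>m. card (face_family n \<tau> f) = 2 ^ m"
proof -
  interpret FPS n \<omega> \<tau> f using assms(1,3,4) by unfold_locales
  show ?thesis by (rule main)
qed
end
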